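(* For all $m,t\in\mathbb{N}$ with $m\geq 3$ and all integers $r$ with $2\leq r\leq \frac{m}{2+\sqrt{2}}$, \[ R_t(r,m)\leq \left(1-\frac{1}{2^t}\right)2^m-\frac{\sqrt{2^t-1}}{2^t}\left(1+\sqrt{2}\right)^{r-1}2^{\frac{m-1}{2}}+\frac{\sqrt{2^t-1}}{2^{t}\sqrt[4]{2} }\,r\binom{m}{r}. \]
   Context: For a $t\times n$ matrix $\mathbf{v}$ over $\mathbb{F}_2$ with rows $\overline{v}_1,\dots,\overline{v}_t$, $\mathrm{wt}^{(t)}(\mathbf{v})=\left|\bigcup_{i} \mathrm{supp}(\overline{v}_i)\right|$ and $d^{(t)}(\mathbf{u},\mathbf{v})=\mathrm{wt}^{(t)}(\mathbf{u}-\mathbf{v})$. For a linear code $C\subseteq\mathbb{F}_2^n$, $C^t$ is the set of $t\times n$ matrices all of whose rows lie in $C$, and $R_t(C)$ is the smallest integer $\rho$ such that for every $\mathbf{v}\in\mathbb{F}_2^{t\times n}$ some $\mathbf{c}\in C^t$ has $d^{(t)}(\mathbf{v},\mathbf{c})\le\rho$. Reed–Muller codes $\mathrm{RM}(r,m)\subseteq\mathbb{F}_2^{2^m}$: $\mathrm{RM}(0,m)=\{\overline{0},\overline{1}\}$, $\mathrm{RM}(m,m)=\mathbb{F}_2^{2^m}$, and for $1\leq r\leq m-1$, $\mathrm{RM}(r,m)=\{(\overline{u},\overline{u}+\overline{v}) : \overline{u}\in \mathrm{RM}(r,m-1),\ \overline{v}\in\mathrm{RM}(r-1,m-1)\}$.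 $R_t(r,m)=R_t(\mathrm{RM}(r,m))$. *)

theory Defs
  imports Complex_Main
begin

text \<open>Binary vectors in F_2^n are bool lists of length n (True = 1); addition is xor.\<close>

definition vadd :: "bool list \<Rightarrow> bool list \<Rightarrow> bool list" where
  "vadd u v = map2 (\<noteq>) u v"

fun RM :: "nat \<Rightarrow> nat \<Rightarrow> bool list set" where
  "RM 0 m = {replicate (2^m) False, replicate (2^m) True}"
| "RM (Suc r) 0 = {v. length v = 1}"
| "RM (Suc r) (Suc m) =
     (if Suc r \<ge> Suc m then {v. length v = 2^(Suc m)}
      else {u @ vadd u v | u v. u \<in> RM (Suc r) m \<and> v \<in> RM r m})"

text \<open>A t x n matrix is a function from row indices i < t to rows (bool lists of length n).\<close>
definition is_mat :: "nat \<Rightarrow> nat \<Rightarrow> (nat \<Rightarrow> bool list) \<Rightarrow> bool" where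
  "is_mat t n v \<longleftrightarrow> (\<forall>i<t. length (v i) = n)"

definition wt_t :: "nat \<Rightarrow> nat \<Rightarrow> (nat \<Rightarrow> bool list) \<Rightarrow> nat" where
  "wt_t t n v = card {j. j < n \<and> (\<exists>i<t. v i ! j)}"

definition dist_t :: "nat \<Rightarrow> nat \<Rightarrow> (nat \<Rightarrow> bool list) \<Rightarrow> (nat \<Rightarrow> bool list) \<Rightarrow> nat" where
  "dist_t t n u v = wt_t t n (\<lambda>i. vadd (u i) (v i))"

definition cov_rad_t :: "nat \<Rightarrow> nat \<Rightarrow> bool list set \<Rightarrow> nat" where
  "cov_rad_t t n C = (LEAST \<rho>. \<forall>v. is_mat t n v \<longrightarrow>
      (\<exists>c. (\<forall>i<t. c i \<in> C) \<and> dist_t t n v c \<le> \<rho>))"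

definition R_RM :: "nat \<Rightarrow> nat \<Rightarrow> nat \<Rightarrow> nat" where
  "R_RM t r m = cov_rad_t t (2^m) (RM r m)"

end

theory Submission
  imports Defs
begin

lemma vadd_len[simp]: "length (vadd u v) = min (length u) (length v)"
  by (simp add: vadd_def)

lemma vadd_nth[simp]: "j < length u \<Longrightarrow> j < length v \<Longrightarrow> vadd u v ! j = (u ! j \<noteq> v ! j)"
  by (simp add: vadd_def)

lemma RM_len: "c \<in> RM r m \<Longrightarrow> length c = 2^m"
proof (induction r m arbitrary: c rule: RM.induct)
  case (1 m) then show ?case by auto
next
  case (2 r) then show ?case by auto
next
  case (3 r m)
  show ?case
  proof (cases "Suc r \<ge> Suc m")
    case True then show ?thesis using 3(3) by auto
  next
    case False
    then obtain u v where "c = u @ vadd u v" "u \<in> RM (Suc r) m" "v \<in> RM r m" using 3(3) by auto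
    then show ?thesis using 3(1)[OF False] 3(2)[OF False] by auto
  qed
qed

lemma RM_finite: "finite (RM r m)"
proof -
  have "RM r m \<subseteq> {xs. set xs \<subseteq> UNIV \<and> length xs = 2^m}" using RM_len by auto
  moreover have "finite {xs::bool list. set xs \<subseteq> UNIV \<and> length xs = 2^m}"
    by (rule finite_lists_length_eq) simp
  ultimately show ?thesis by (rule finite_subset)
qed

lemma RM_full: assumes "1 \<le> r" "m \<le> r" shows "RM r m = {v. length v = 2^m}"
  using assms
proof (cases r)
  case 0 then show ?thesis using assms by simp
next
  case (Suc r')
  then show ?thesis using assms by (cases m) auto
qed

lemma RM_rec: "1 \<le> r \<Longrightarrow> r < m \<Longrightarrow>
   RM r m = (\<lambda>(u,v). u @ vadd u v) ` (RM r (m-1) \<times> RM (r-1) (m-1))"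
proof -
  assume a: "1 \<le> r" "r < m"
  obtain r' where r: "r = Suc r'" using a by (cases r) auto
  obtain m' where m: "m = Suc m'" using a by (cases m) auto
  show ?thesis using a unfolding r m by auto
qed

lemma RM1_rec: "RM 1 (Suc m) = (\<lambda>(u,v). u @ vadd u v) ` (RM 1 m \<times> RM 0 m)"
proof (cases m)
  case 0
  show ?thesis
  proof
    show "RM 1 (Suc m) \<subseteq> (\<lambda>(u,v). u @ vadd u v) ` (RM 1 m \<times> RM 0 m)"
    proof
      fix c assume "c \<in> RM 1 (Suc m)"
      then have "length c = 2" using 0 by simp
      then obtain x y where c: "c = [x,y]"
        by (metis (no_types, lifting) One_nat_def Suc_1 length_0_conv length_Suc_conv)
      have "c = (\<lambda>(u,v). u @ vadd u v) ([x], [x \<noteq> y])" using c by (auto simp: vadd_def)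
      moreover have "([x], [x \<noteq> y]) \<in> RM 1 m \<times> RM 0 m" using 0 by (cases "x \<noteq> y") auto
      ultimately show "c \<in> (\<lambda>(u,v). u @ vadd u v) ` (RM 1 m \<times> RM 0 m)" by blast
    qed
  next
    show "(\<lambda>(u,v). u @ vadd u v) ` (RM 1 m \<times> RM 0 m) \<subseteq> RM 1 (Suc m)"
      using 0 by auto
  qed
next
  case (Suc k)
  then show ?thesis using RM_rec[of 1 "Suc m"] by simp
qed

lemma vadd_inj: "length u = length u' \<Longrightarrow> u @ vadd u v = u' @ vadd u' v' \<Longrightarrow>
   length v = length u \<Longrightarrow> length v' = length u \<Longrightarrow> u = u' \<and> v = v'"
proof -
  assume l: "length u = length u'" and e: "u @ vadd u v = u' @ vadd u' v'"
    and lv: "length v = length u" "length v' = length u"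
  have uu: "u = u'" using e l by simp
  then have "vadd u v = vadd u v'" using e by simp
  then have "\<forall>j<length u. v ! j = v' ! j"
    by (metis lv vadd_nth)
  then have "v = v'" using lv by (simp add: nth_equalityI)
  then show ?thesis using uu by simp
qed

lemma inj_split: "inj_on (\<lambda>(u,v). u @ vadd u v) (RM a m \<times> RM b m)"
  unfolding inj_on_def using vadd_inj RM_len by force


lemma sum_double: "(\<Sum>j<n+n. f j) = (\<Sum>j<n. f j) + (\<Sum>j<n. f (j+n)) " for f :: "nat \<Rightarrow> real"
proof -
  have "{..<n+n} = {..<n} \<union> {n..<n+n}" by auto
  then have "(\<Sum>j<n+n. f j) = (\<Sum>j<n. f j) + (\<Sum>j\<in>{n..<n+n}. f j)"
    by (metis finite_lessThan finite_atLeastLessThan ivl_disj_int_one(2) sum.union_disjoint)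
  also have "(\<Sum>j\<in>{n..<n+n}. f j) = (\<Sum>j\<in>{0..<n}. f (j+n))"
    using sum.atLeastLessThan_shift_bounds[of f 0 n n] by (simp add: comp_def add.commute)
  finally show ?thesis by (simp add: atLeast0LessThan)
qed

definition sg :: "bool \<Rightarrow> real" where "sg b = (if b then -1 else 1)"

definition TT :: "nat \<Rightarrow> (nat \<Rightarrow> real) \<Rightarrow> bool list \<Rightarrow> real" where
  "TT n h c = (\<Sum>j<n. h j * sg (c ! j))"

lemma TT_append: "length u = n \<Longrightarrow> TT (n+n) h (u @ x) = TT n h u + TT n (\<lambda>j. h (j+n)) x"
  unfolding TT_def by (simp add: sum_double nth_append)

lemma TT_F: "length u = n \<Longrightarrow> TT n h (vadd u (replicate n False)) = TT n h u"
  unfolding TT_def by (intro sum.cong) auto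

lemma TT_T: "length u = n \<Longrightarrow> TT n h (vadd u (replicate n True)) = - TT n h u"
  unfolding TT_def sum_negf[symmetric] by (intro sum.cong) (auto simp: sg_def)

lemma RM1_0: "RM 1 0 = {[False],[True]}"
proof -
  have "RM 1 0 = {v. length v = 1}" by simp
  also have "\<dots> = {[False],[True]}"
  proof
    show "{v::bool list. length v = 1} \<subseteq> {[False], [True]}"
    proof
      fix v :: "bool list" assume "v \<in> {v. length v = 1}"
      then obtain b where "v = [b]" by (auto simp: length_Suc_conv)
      then show "v \<in> {[False],[True]}" by (cases b) auto
    qed
  qed auto
  finally show ?thesis .
qed

lemma parseval: "(\<Sum>c\<in>RM 1 m. (TT (2^m) h c)^2) = 2^(m+1) * (\<Sum>j<2^m. (h j)^2)
   \<and> card (RM 1 m) = 2^(m+1)"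
proof (induction m arbitrary: h)
  case 0
  show ?case by (simp only: RM1_0) (simp add: TT_def sg_def power2_eq_square)
next
  case (Suc m)
  let ?n = "2^m :: nat"
  let ?f = "\<lambda>(u,v). u @ vadd u v"
  have neq: "replicate ?n False \<noteq> replicate ?n True"
    by (metis Suc_pred length_replicate nth_replicate pos2 zero_less_power zero_less_Suc)
  have R0: "RM 0 m = {replicate ?n False, replicate ?n True}" by simp
  have e: "(2::nat)^Suc m = ?n + ?n" by simp
  have "(\<Sum>c\<in>RM 1 (Suc m). (TT (2^Suc m) h c)^2) = (\<Sum>p\<in>RM 1 m \<times> RM 0 m. (TT (2^Suc m) h (?f p))^2)"
    unfolding RM1_rec by (subst sum.reindex[OF inj_split]) (simp add: comp_def)
  also have "\<dots> = (\<Sum>u\<in>RM 1 m. \<Sum>v\<in>RM 0 m. (TT (2^Suc m) h (u @ vadd u v))^2)"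
    by (subst sum.cartesian_product) (simp add: case_prod_beta)
  also have "\<dots> = (\<Sum>u\<in>RM 1 m. 2 * (TT ?n h u)^2 + 2 * (TT ?n (\<lambda>j. h (j + ?n)) u)^2)"
  proof (rule sum.cong[OF refl])
    fix u assume u: "u \<in> RM 1 m"
    then have lu: "length u = ?n" using RM_len by blast
    show "(\<Sum>v\<in>RM 0 m. (TT (2^Suc m) h (u @ vadd u v))^2) =
        2 * (TT ?n h u)^2 + 2 * (TT ?n (\<lambda>j. h (j + ?n)) u)^2"
      unfolding R0 e using neq lu
      by (simp add: TT_append TT_F TT_T power2_eq_square algebra_simps)
  qed
  also have "\<dots> = 2 * (2^(m+1) * (\<Sum>j<?n. (h j)^2)) + 2 * (2^(m+1) * (\<Sum>j<?n. (h (j + ?n))^2))"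
    using Suc.IH[of h] Suc.IH[of "\<lambda>j. h (j + ?n)"] by (simp add: sum.distrib sum_distrib_left[symmetric])
  also have "\<dots> = 2^(Suc m+1) * (\<Sum>j<2^Suc m. (h j)^2)"
    unfolding e sum_double by (simp add: algebra_simps)
  finally have A: "(\<Sum>c\<in>RM 1 (Suc m). (TT (2^Suc m) h c)^2) = 2^(Suc m+1) * (\<Sum>j<2^Suc m. (h j)^2)" .
  have "card (RM 1 (Suc m)) = card (RM 1 m \<times> RM 0 m)"
    unfolding RM1_rec by (rule card_image[OF inj_split])
  also have "\<dots> = 2^(Suc m + 1)" using Suc.IH neq by (simp add: card_cartesian_product)
  finally show ?case using A by simp
qed


lemma RM1_compl: "c \<in> RM 1 m \<Longrightarrow> \<exists>c'\<in>RM 1 m. \<forall>h. TT (2^m) h c' = - TT (2^m) h c"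
proof (induction m arbitrary: c)
  case 0
  then have "c = [False] \<or> c = [True]" by (simp only: RM1_0) simp
  then show ?case
  proof
    assume "c = [False]" then show ?thesis
      by (intro bexI[of _ "[True]"]) (auto simp: RM1_0 TT_def sg_def)
  next
    assume "c = [True]" then show ?thesis
      by (intro bexI[of _ "[False]"]) (auto simp: RM1_0 TT_def sg_def)
  qed
next
  case (Suc m)
  let ?n = "2^m :: nat"
  from Suc.prems obtain u v where c: "c = u @ vadd u v" and u: "u \<in> RM 1 m" and v: "v \<in> RM 0 m"
    unfolding RM1_rec by auto
  obtain u' where u': "u' \<in> RM 1 m" and uh: "\<forall>h. TT ?n h u' = - TT ?n h u" using Suc.IH[OF u] by blast
  have lu: "length u = ?n" "length u' = ?n" using u u' RM_len by auto
  have e: "(2::nat)^Suc m = ?n + ?n" by simp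
  have vv: "v = replicate ?n False \<or> v = replicate ?n True" using v by simp
  show ?case
  proof (intro bexI[of _ "u' @ vadd u' v"] allI)
    show "u' @ vadd u' v \<in> RM 1 (Suc m)" unfolding RM1_rec using u' v by auto
    fix h
    show "TT (2^Suc m) h (u' @ vadd u' v) = - TT (2^Suc m) h c"
      unfolding c e using vv lu uh by (auto simp: TT_append TT_F TT_T)
  qed
qed

lemma exists_good: "\<exists>c\<in>RM 1 m. TT (2^m) h c \<ge> sqrt (\<Sum>j<2^m. (h j)^2)"
proof -
  let ?s = "\<Sum>j<2^m. (h j)^2"
  have P: "(\<Sum>c\<in>RM 1 m. (TT (2^m) h c)^2) = 2^(m+1) * ?s" and C: "card (RM 1 m) = 2^(m+1)"
    using parseval by auto
  have ne: "RM 1 m \<noteq> {}" using C by auto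
  have "\<exists>c\<in>RM 1 m. (TT (2^m) h c)^2 \<ge> ?s"
  proof (rule ccontr)
    assume "\<not> ?thesis"
    then have lt: "\<And>c. c \<in> RM 1 m \<Longrightarrow> (TT (2^m) h c)^2 < ?s" by (meson not_le)
    have "(\<Sum>c\<in>RM 1 m. (TT (2^m) h c)^2) < (\<Sum>c\<in>RM 1 m. ?s)"
      by (rule sum_strict_mono[OF RM_finite ne lt])
    then show False using P C by simp
  qed
  then obtain c where c: "c \<in> RM 1 m" "(TT (2^m) h c)^2 \<ge> ?s" by blast
  then have a: "\<bar>TT (2^m) h c\<bar> \<ge> sqrt ?s"
    using real_sqrt_le_mono[OF c(2)] by simp
  show ?thesis
  proof (cases "TT (2^m) h c \<ge> 0")
    case True then show ?thesis using a c by auto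
  next
    case False
    obtain c' where "c' \<in> RM 1 m" "TT (2^m) h c' = - TT (2^m) h c" using RM1_compl[OF c(1)] by blast
    then show ?thesis using a False by (intro bexI[of _ c']) auto
  qed
qed

lemma one_row:
  assumes S: "S \<subseteq> {..<2^m}" and w: "length w = 2^m"
  shows "\<exists>c\<in>RM 1 m. 2 * real (card {j\<in>S. w ! j = c ! j}) \<ge> real (card S) + sqrt (card S)"
proof -
  define h where "h j = (if j \<in> S then sg (w ! j) else 0)" for j
  obtain c where c: "c \<in> RM 1 m" "TT (2^m) h c \<ge> sqrt (\<Sum>j<2^m. (h j)^2)" using exists_good by blast
  have fS: "finite S" using S finite_subset by blast
  have "(\<Sum>j<2^m. (h j)^2) = (\<Sum>j\<in>S. 1)"
  proof -
    have "(\<Sum>j<2^m. (h j)^2) = (\<Sum>j<2^m. if j \<in> S then 1 else 0)"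
      by (intro sum.cong) (auto simp: h_def sg_def)
    also have "\<dots> = (\<Sum>j\<in>S. 1)"
      using S by (simp add: sum.If_cases Int_absorb1)
    finally show ?thesis .
  qed
  then have s1: "(\<Sum>j<2^m. (h j)^2) = real (card S)" by simp
  have "TT (2^m) h c = (\<Sum>j<2^m. if j \<in> S then (if w ! j = c ! j then 1 else -1) else 0)"
    unfolding TT_def by (intro sum.cong) (auto simp: h_def sg_def)
  also have "\<dots> = (\<Sum>j\<in>S. (if w ! j = c ! j then 1 else -1))"
    using S by (simp add: sum.If_cases Int_absorb1)
  also have "\<dots> = real (card {j\<in>S. w ! j = c ! j}) - real (card {j\<in>S. w ! j \<noteq> c ! j})"
  proof -
    have "(\<Sum>j\<in>S. (if w ! j = c ! j then 1 else -1::real)) = (\<Sum>j\<in>S \<inter> {j. w ! j = c ! j}. 1) + (\<Sum>j\<in>S \<inter> - {j. w ! j = c ! j}. -1)"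
      by (rule sum.If_cases[OF fS])
    moreover have "S \<inter> {j. w ! j = c ! j} = {j\<in>S. w ! j = c ! j}" "S \<inter> - {j. w ! j = c ! j} = {j\<in>S. w ! j \<noteq> c ! j}" by auto
    ultimately show ?thesis by simp
  qed
  finally have T: "TT (2^m) h c = real (card {j\<in>S. w ! j = c ! j}) - real (card {j\<in>S. w ! j \<noteq> c ! j})" .
  have "card S = card {j\<in>S. w ! j = c ! j} + card {j\<in>S. w ! j \<noteq> c ! j}"
  proof -
    have "S = {j\<in>S. w ! j = c ! j} \<union> {j\<in>S. w ! j \<noteq> c ! j}" by auto
    moreover have "card ({j\<in>S. w ! j = c ! j} \<union> {j\<in>S. w ! j \<noteq> c ! j}) = card {j\<in>S. w ! j = c ! j} + card {j\<in>S. w ! j \<noteq> c ! j}"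
      by (rule card_Un_disjoint) (use fS in auto)
    ultimately show ?thesis by simp
  qed
  then show ?thesis using c T s1 by (intro bexI[of _ c]) auto
qed


definition agr_set :: "nat \<Rightarrow> nat \<Rightarrow> (nat \<Rightarrow> bool list) \<Rightarrow> (nat \<Rightarrow> bool list) \<Rightarrow> nat set" where
  "agr_set t n v c = {j. j < n \<and> (\<forall>i<t. v i ! j = c i ! j)}"

definition GG :: "nat \<Rightarrow> nat \<Rightarrow> real" where
  "GG m k = 2^m/2^k + sqrt (2^m/2) * sqrt (2^k-1) / 2^k"

lemma GG_step:
  assumes x: "x \<ge> GG m k"
  shows "(x + sqrt x) / 2 \<ge> GG m (Suc k)"
proof -
  define p :: real where "p = 2^k"
  define a :: real where "a = sqrt (2^m/2)"
  have p1: "p \<ge> 1" unfolding p_def by simp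
  have a0: "a \<ge> 0" unfolding a_def by simp
  have G: "GG m k = 2^m/p + a * sqrt (p-1) / p" "GG m (Suc k) = 2^m/(2*p) + a * sqrt (2*p-1) / (2*p)"
    unfolding GG_def p_def a_def by simp_all
  have "x \<ge> 2^m/p" using x G p1 a0 by (smt (verit) divide_nonneg_pos mult_nonneg_nonneg real_sqrt_ge_zero)
  then have sx: "sqrt x \<ge> sqrt (2^m/p)" by (rule real_sqrt_le_mono)
  have e: "sqrt (2^m/p) = a * sqrt (2*p) / p"
  proof -
    have "2^m/2 * (2*p) / (p*p) = 2^m/p" using p1 by (simp add: field_simps)
    then have "sqrt (2^m/p) = sqrt (2^m/2 * (2*p) / (p*p))" by simp
    also have "\<dots> = sqrt (2^m/2) * sqrt (2*p) / sqrt (p*p)"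
      by (simp only: real_sqrt_mult real_sqrt_divide)
    also have "sqrt (p*p) = p" using p1 by simp
    finally show ?thesis unfolding a_def .
  qed
  have q1: "sqrt (2*p-1) \<le> sqrt (2*p)" by (rule real_sqrt_le_mono) simp
  have q2: "sqrt (p-1) \<ge> 0" using p1 by simp
  have q: "sqrt (2*p-1) \<le> sqrt (p-1) + sqrt (2*p)" using q1 q2 by linarith
  have m1: "a * sqrt (2*p-1) \<le> a * (sqrt (p-1) + sqrt (2*p))" by (rule mult_left_mono[OF q a0])
  have m2: "a * sqrt (2*p-1) / (2*p) \<le> a * (sqrt (p-1) + sqrt (2*p)) / (2*p)"
    by (rule divide_right_mono[OF m1]) (use p1 in simp)
  have m3: "2^m/(2*p) + a * (sqrt (p-1) + sqrt (2*p)) / (2*p) = (GG m k + a * sqrt (2*p) / p) / 2"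
    unfolding G using p1 by (simp add: add_divide_distrib distrib_left)
  have m40: "GG m k + a * sqrt (2*p) / p \<le> x + sqrt x" using x sx unfolding e by (rule add_mono)
  have m4: "(GG m k + a * sqrt (2*p) / p) / 2 \<le> (x + sqrt x)/2" using divide_right_mono[OF m40, of 2] by simp
  have "GG m (Suc k) \<le> 2^m/(2*p) + a * (sqrt (p-1) + sqrt (2*p)) / (2*p)"
    unfolding G(2) by (rule add_left_mono[OF m2])
  also note m3
  also note m4
  finally show ?thesis .
qed

lemma greedy:
  "(\<forall>i<k. length (v i) = 2^m) \<Longrightarrow>
   \<exists>c. (\<forall>i<k. c i \<in> RM 1 m) \<and> GG m k \<le> real (card (agr_set k (2^m) v c))"
proof (induction k)
  case 0
  show ?case by (intro exI[of _ "\<lambda>_. []"]) (simp add: GG_def agr_set_def)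
next
  case (Suc k)
  then obtain c where c: "\<forall>i<k. c i \<in> RM 1 m" "GG m k \<le> real (card (agr_set k (2^m) v c))" by auto
  let ?S = "agr_set k (2^m) v c"
  have S: "?S \<subseteq> {..<2^m}" unfolding agr_set_def by auto
  obtain c' where c': "c' \<in> RM 1 m" "2 * real (card {j\<in>?S. v k ! j = c' ! j}) \<ge> real (card ?S) + sqrt (card ?S)"
    using one_row[OF S, of "v k"] Suc.prems by auto
  have eq: "agr_set (Suc k) (2^m) v (c(k := c')) = {j\<in>?S. v k ! j = c' ! j}"
    unfolding agr_set_def
  proof (intro set_eqI iffI)
    fix j assume "j \<in> {j. j < 2^m \<and> (\<forall>i<Suc k. v i ! j = (c(k := c')) i ! j)}"
    then show "j \<in> {j \<in> {j. j < 2 ^ m \<and> (\<forall>i<k. v i ! j = c i ! j)}. v k ! j = c' ! j}"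
      by force
  next
    fix j assume "j \<in> {j \<in> {j. j < 2 ^ m \<and> (\<forall>i<k. v i ! j = c i ! j)}. v k ! j = c' ! j}"
    then show "j \<in> {j. j < 2^m \<and> (\<forall>i<Suc k. v i ! j = (c(k := c')) i ! j)}"
      using less_Suc_eq by auto
  qed
  show ?case
  proof (intro exI[of _ "c(k := c')"] conjI)
    show "\<forall>i<Suc k. (c(k := c')) i \<in> RM 1 m" using c c' by (auto simp: less_Suc_eq)
    have h1: "GG m (Suc k) \<le> (real (card ?S) + sqrt (card ?S)) / 2" by (rule GG_step[OF c(2)])
    have h2: "(real (card ?S) + sqrt (card ?S)) / 2 \<le> real (card {j\<in>?S. v k ! j = c' ! j})"
      using divide_right_mono[OF c'(2), of 2] by simp
    have "GG m (Suc k) \<le> real (card {j\<in>?S. v k ! j = c' ! j})" by (rule order_trans[OF h1 h2])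
    then show "GG m (Suc k) \<le> real (card (agr_set (Suc k) (2^m) v (c(k := c'))))"
      by (simp only: eq)
  qed
qed


definition good :: "nat \<Rightarrow> nat \<Rightarrow> nat \<Rightarrow> real \<Rightarrow> bool" where
  "good t r m A \<longleftrightarrow> (\<forall>v. is_mat t (2^m) v \<longrightarrow>
      (\<exists>c. (\<forall>i<t. c i \<in> RM r m) \<and> A \<le> real (card (agr_set t (2^m) v c))))"

lemma good_mono: "good t r m B \<Longrightarrow> A \<le> B \<Longrightarrow> good t r m A"
  unfolding good_def by (meson order_trans)

lemma good_full: "1 \<le> r \<Longrightarrow> m \<le> r \<Longrightarrow> good t r m (2^m)"
  unfolding good_def
proof (intro allI impI)
  fix v assume r: "1 \<le> r" "m \<le> r" and v: "is_mat t (2^m) v"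
  have "agr_set t (2^m) v v = {..<2^m}" unfolding agr_set_def by auto
  then show "\<exists>c. (\<forall>i<t. c i \<in> RM r m) \<and> 2^m \<le> real (card (agr_set t (2^m) v c))"
    using v r RM_full[OF r] unfolding is_mat_def by (intro exI[of _ v]) auto
qed

lemma good_one: "good t 1 m (GG m t)"
  unfolding good_def is_mat_def using greedy by blast

lemma good_rec:
  assumes r: "1 \<le> r" "r < m" and g1: "good t r (m-1) A1" and g2: "good t (r-1) (m-1) A2"
  shows "good t r m (A1 + A2)"
  unfolding good_def
proof (intro allI impI)
  fix v assume v: "is_mat t (2^m) v"
  obtain m' where m: "m = Suc m'" using r by (cases m) auto
  define n where "n = (2::nat)^m'"
  have nn: "(2::nat)^m = n + n" unfolding m n_def by simp
  define L where "L i = take n (v i)" for i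
  define Rr where "Rr i = drop n (v i)" for i
  have lv: "\<And>i. i < t \<Longrightarrow> length (v i) = n + n" using v nn unfolding is_mat_def by auto
  have "is_mat t (2^(m-1)) L" unfolding is_mat_def L_def n_def m using lv n_def by simp
  then obtain a where a: "\<forall>i<t. a i \<in> RM r (m-1)" "A1 \<le> real (card (agr_set t n L a))"
    using g1 unfolding good_def n_def m by auto
  have la: "\<And>i. i < t \<Longrightarrow> length (a i) = n" using a(1) RM_len unfolding n_def m by auto
  define v2 where "v2 i = vadd (Rr i) (a i)" for i
  have "is_mat t (2^(m-1)) v2" unfolding is_mat_def v2_def Rr_def using lv la n_def m by simp
  then obtain b where b: "\<forall>i<t. b i \<in> RM (r-1) (m-1)" "A2 \<le> real (card (agr_set t n v2 b))"
    using g2 unfolding good_def n_def m by auto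
  have lb: "\<And>i. i < t \<Longrightarrow> length (b i) = n" using b(1) RM_len unfolding n_def m by auto
  define c where "c i = a i @ vadd (a i) (b i)" for i
  have cin: "\<forall>i<t. c i \<in> RM r m"
    using a(1) b(1) RM_rec[OF r] unfolding c_def by auto
  have eq: "agr_set t (2^m) v c = agr_set t n L a \<union> (\<lambda>j. j + n) ` agr_set t n v2 b"
  proof (intro set_eqI)
    fix x
    show "x \<in> agr_set t (2^m) v c \<longleftrightarrow> x \<in> agr_set t n L a \<union> (\<lambda>j. j + n) ` agr_set t n v2 b"
    proof (cases "x < n")
      case True
      have "\<And>i. i < t \<Longrightarrow> (v i ! x = c i ! x) = (L i ! x = a i ! x)"
        using True la lv unfolding c_def L_def by (simp add: nth_append)
      then show ?thesis using True unfolding agr_set_def nn by auto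
    next
      case False
      then obtain k where k: "x = k + n" by (metis add.commute le_Suc_ex not_less)
      have "\<And>i. i < t \<Longrightarrow> k < n \<Longrightarrow> (v i ! x = c i ! x) = (v2 i ! k = b i ! k)"
        using la lv lb unfolding c_def v2_def Rr_def k by (auto simp: nth_append add.commute)
      then show ?thesis unfolding agr_set_def nn k by auto
    qed
  qed
  have "card (agr_set t (2^m) v c) = card (agr_set t n L a) + card ((\<lambda>j. j + n) ` agr_set t n v2 b)"
    unfolding eq by (rule card_Un_disjoint) (auto simp: agr_set_def)
  also have "card ((\<lambda>j. j + n) ` agr_set t n v2 b) = card (agr_set t n v2 b)"
    by (rule card_image) (simp add: inj_on_def)
  finally have "card (agr_set t (2^m) v c) = card (agr_set t n L a) + card (agr_set t n v2 b)" .
  then show "\<exists>c. (\<forall>i<t. c i \<in> RM r m) \<and> A1 + A2 \<le> real (card (agr_set t (2^m) v c))"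
    using a(2) b(2) cin by (intro exI[of _ c]) auto
qed

lemma dist_agr:
  assumes v: "is_mat t n v" and c: "\<forall>i<t. length (c i) = n"
  shows "dist_t t n v c + card (agr_set t n v c) = n"
proof -
  let ?D = "{j. j < n \<and> (\<exists>i<t. vadd (v i) (c i) ! j)}"
  have "?D = {..<n} - agr_set t n v c"
    using v c unfolding agr_set_def is_mat_def by auto
  then have "card ?D = n - card (agr_set t n v c)"
    by (simp add: card_Diff_subset agr_set_def subset_eq)
  moreover have "card (agr_set t n v c) \<le> n"
    by (metis (no_types, lifting) agr_set_def card_lessThan card_mono finite_lessThan lessThan_iff mem_Collect_eq subsetI)
  ultimately show ?thesis unfolding dist_t_def wt_t_def by simp
qed

lemma cov_le:
  assumes g: "good t r m A"
  shows "real (R_RM t r m) \<le> 2^m - A"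
proof -
  let ?n = "(2::nat)^m"
  have key: "\<forall>v. is_mat t ?n v \<longrightarrow> (\<exists>c. (\<forall>i<t. c i \<in> RM r m) \<and> dist_t t ?n v c \<le> nat \<lfloor>2^m - A\<rfloor>)"
  proof (intro allI impI)
    fix v assume v: "is_mat t ?n v"
    obtain c where c: "\<forall>i<t. c i \<in> RM r m" "A \<le> real (card (agr_set t ?n v c))"
      using g v unfolding good_def by auto
    have "dist_t t ?n v c + card (agr_set t ?n v c) = ?n"
      using dist_agr[OF v] c(1) RM_len by blast
    then have "real (dist_t t ?n v c) \<le> 2^m - A" using c(2)
      by (metis add_diff_cancel_right' diff_left_mono of_nat_add of_nat_numeral of_nat_power)
    then have "int (dist_t t ?n v c) \<le> \<lfloor>2^m - A\<rfloor>" by (simp add: le_floor_iff)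
    then show "\<exists>c. (\<forall>i<t. c i \<in> RM r m) \<and> dist_t t ?n v c \<le> nat \<lfloor>2^m - A\<rfloor>"
      using c(1) by (intro exI[of _ c]) auto
  qed
  have "R_RM t r m \<le> nat \<lfloor>2^m - A\<rfloor>"
    unfolding R_RM_def cov_rad_t_def by (rule Least_le) (rule key)
  moreover have "A \<le> 2^m"
  proof -
    have "is_mat t ?n (\<lambda>_. replicate ?n False)" unfolding is_mat_def by simp
    then obtain c where c: "A \<le> real (card (agr_set t ?n (\<lambda>_. replicate ?n False) c))"
      using g unfolding good_def by blast
    have "card (agr_set t ?n (\<lambda>_. replicate ?n False) c) \<le> ?n"
      by (metis (no_types, lifting) agr_set_def card_lessThan card_mono finite_lessThan lessThan_iff mem_Collect_eq subsetI)
    then show ?thesis using c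
      by (metis of_nat_le_iff of_nat_numeral of_nat_power order_trans)
  qed
  moreover have "real (nat \<lfloor>2^m - A\<rfloor>) \<le> 2^m - A"
  proof -
    have "\<lfloor>2^m - A\<rfloor> \<ge> 0" using \<open>A \<le> 2^m\<close> by simp
    then have "real (nat \<lfloor>2^m - A\<rfloor>) = real_of_int \<lfloor>2^m - A\<rfloor>" by simp
    also have "\<dots> \<le> 2^m - A" by (rule of_int_floor_le)
    finally show ?thesis .
  qed
  ultimately show ?thesis by (meson of_nat_le_iff order_trans)
qed


definition XX :: "nat \<Rightarrow> nat \<Rightarrow> real" where
  "XX r m = (1 + sqrt 2)^(r-1) * sqrt (2^m/2)"

definition PP :: "nat \<Rightarrow> nat \<Rightarrow> real" where
  "PP r m = (\<Sum>j\<in>{2..r}. real ((m-j) choose (r-j)) * (2 + sqrt 2)^(j-1))"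

definition AA :: "nat \<Rightarrow> nat \<Rightarrow> nat \<Rightarrow> real" where
  "AA t r m = 2^m/2^t + sqrt (2^t-1)/2^t * (XX r m - PP r m)"

lemma XX_rec:
  assumes "2 \<le> r"
  shows "XX r (Suc m) = XX r m + XX (r-1) m"
proof -
  obtain r1 where r: "r = Suc (Suc r1)" using assms by (metis add_2_eq_Suc le_Suc_ex)
  define y where "y = (1 + sqrt 2)^r1"
  define b where "b = sqrt (2^m/2)"
  have s: "sqrt (2^Suc m / 2) = sqrt 2 * b"
    unfolding b_def by (simp add: real_sqrt_mult[symmetric])
  have "XX r (Suc m) = y * (1 + sqrt 2) * sqrt 2 * b" unfolding XX_def r y_def s by simp
  also have "\<dots> = y * (1 + sqrt 2) * b + y * b" by (simp add: algebra_simps)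
  also have "\<dots> = XX r m + XX (r-1) m" unfolding XX_def r y_def b_def by simp
  finally show ?thesis .
qed

lemma PP_rec:
  assumes "2 \<le> r" "r \<le> m"
  shows "PP r (Suc m) = PP r m + PP (r-1) m"
proof -
  obtain r1 where r: "r = Suc r1" and r1: "1 \<le> r1" using assms by (cases r) auto
  let ?q = "2 + sqrt 2 :: real"
  have "PP r (Suc m) = (\<Sum>j\<in>{2..r1}. real ((Suc m-j) choose (Suc r1-j)) * ?q^(j-1)) + ?q^r1"
    unfolding PP_def r using r1 by (simp add: sum.cl_ivl_Suc)
  also have "(\<Sum>j\<in>{2..r1}. real ((Suc m-j) choose (Suc r1-j)) * ?q^(j-1)) =
     (\<Sum>j\<in>{2..r1}. real ((m-j) choose (Suc r1-j)) * ?q^(j-1)) + (\<Sum>j\<in>{2..r1}. real ((m-j) choose (r1-j)) * ?q^(j-1))"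
    unfolding sum.distrib[symmetric]
  proof (rule sum.cong[OF refl])
    fix j assume j: "j \<in> {2..r1}"
    then have "Suc m - j = Suc (m - j)" "Suc r1 - j = Suc (r1 - j)" using assms r by auto
    then show "real ((Suc m-j) choose (Suc r1-j)) * ?q^(j-1) =
        real ((m-j) choose (Suc r1-j)) * ?q^(j-1) + real ((m-j) choose (r1-j)) * ?q^(j-1)"
      by (simp add: algebra_simps)
  qed
  also have "PP r m = (\<Sum>j\<in>{2..r1}. real ((m-j) choose (Suc r1-j)) * ?q^(j-1)) + ?q^r1"
    unfolding PP_def r using r1 by (simp add: sum.cl_ivl_Suc)
  moreover have "PP (r-1) m = (\<Sum>j\<in>{2..r1}. real ((m-j) choose (r1-j)) * ?q^(j-1))"
    unfolding PP_def r by simp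
  ultimately show ?thesis by simp
qed

lemma XX_diag: "XX m m = (2 + sqrt 2)^(m-1)" if "1 \<le> m"
proof -
  have "sqrt (2^m/2) = sqrt 2^(m-1)"
  proof -
    have "(2::real)^m/2 = 2^(m-1)" using that by (cases m) auto
    then show ?thesis by (simp add: real_sqrt_power)
  qed
  then show ?thesis unfolding XX_def by (simp add: power_mult_distrib[symmetric] algebra_simps)
qed

lemma PP_diag: "PP m m \<ge> (2 + sqrt 2)^(m-1)" if "2 \<le> m"
proof -
  have "(2 + sqrt 2)^(m-1) = real ((m-m) choose (m-m)) * (2 + sqrt 2)^(m-1)" by simp
  also have "\<dots> \<le> PP m m" unfolding PP_def
    by (rule member_le_sum[of m "{2..m}" "\<lambda>j. real ((m-j) choose (m-j)) * (2 + sqrt 2)^(j-1)"])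
       (use that in auto)
  finally show ?thesis .
qed

lemma main: "1 \<le> r \<Longrightarrow> r \<le> m \<Longrightarrow> good t r m (AA t r m)"
proof (induction m arbitrary: r)
  case 0 then show ?case by simp
next
  case (Suc m)
  have s0: "sqrt (2^t-1)/2^t \<ge> (0::real)" by simp
  show ?case
  proof (cases "r = 1")
    case True
    have "AA t r (Suc m) = GG (Suc m) t"
      unfolding AA_def GG_def XX_def PP_def True by simp
    then show ?thesis using good_one True by simp
  next
    case False
    then have r2: "2 \<le> r" using Suc.prems by simp
    show ?thesis
    proof (cases "r = Suc m")
      case True
      have "XX r (Suc m) - PP r (Suc m) \<le> 0"
        using XX_diag[of "Suc m"] PP_diag[of "Suc m"] r2 True by simp
      then have "sqrt (2^t-1)/2^t * (XX r (Suc m) - PP r (Suc m)) \<le> 0"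
        by (rule mult_nonneg_nonpos[OF s0])
      moreover have "(2::real)^Suc m / 2^t \<le> 2^Suc m" by (simp add: divide_le_eq)
      ultimately have "AA t r (Suc m) \<le> 2^Suc m" unfolding AA_def by linarith
      then show ?thesis using good_mono good_full[of r "Suc m" t] True by auto
    next
      case False
      then have rm: "r \<le> m" using Suc.prems by simp
      have g1: "good t r m (AA t r m)" using Suc.IH[of r] rm r2 by simp
      have g2: "good t (r-1) m (AA t (r-1) m)" using Suc.IH[of "r-1"] rm r2 by simp
      have "good t r (Suc m) (AA t r m + AA t (r-1) m)"
        using good_rec[of r "Suc m" t] g1 g2 r2 rm by simp
      moreover have "AA t r (Suc m) = AA t r m + AA t (r-1) m"
      proof -
        have e: "(2::real)^Suc m / 2^t = 2^m/2^t + 2^m/2^t" by simp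
        have gen: "\<And>a s x1 x2 p1 p2::real. a + a + s*((x1+x2)-(p1+p2)) = (a + s*(x1-p1)) + (a + s*(x2-p2))"
          by (simp add: algebra_simps)
        show ?thesis unfolding AA_def XX_rec[OF r2] PP_rec[OF r2 rm] e by (rule gen)
      qed
      ultimately show ?thesis by simp
    qed
  qed
qed

lemma binom_est:
  fixes q :: real
  assumes q: "q \<ge> 1" and rq: "real r * q \<le> real m"
  shows "j \<le> r \<Longrightarrow> real ((m-j) choose (r-j)) * q^j \<le> real (m choose r)"
proof (induction j)
  case 0 then show ?case by simp
next
  case (Suc j)
  have rr: "real r \<le> real r * q" using q by (simp add: mult_le_cancel_left1)
  have rm: "r \<le> m" using rr rq by linarith
  define a where "a = m - Suc j"
  define b where "b = r - Suc j"
  have ab: "m - j = Suc a" "r - j = Suc b" using Suc.prems rm unfolding a_def b_def by auto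
  have id: "real (Suc a) * real (a choose b) = real (Suc a choose Suc b) * real (Suc b)"
    using Suc_times_binomial_eq[of a b] by (metis of_nat_mult)
  have pos: "real (Suc a) > 0" by simp
  have fr: "q * real (Suc b) \<le> real (Suc a)"
  proof -
    have e1: "real (Suc b) = real r - real j" "real (Suc a) = real m - real j"
      using ab Suc.prems rm by auto
    have "q * real j \<ge> real j" using q by (simp add: mult_le_cancel_right1)
    then have "q * (real r - real j) \<le> real m - real j" using rq by (simp add: right_diff_distrib mult.commute)
    then show ?thesis unfolding e1 .
  qed
  define C' where "C' = real (Suc a choose Suc b)"
  define f where "f = q * real (Suc b) / real (Suc a)"
  have f1: "f \<le> 1" unfolding f_def using fr pos by simp
  have f0: "f \<ge> 0" unfolding f_def using q by simp
  have ab2: "real (a choose b) = C' * real (Suc b) / real (Suc a)"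
    unfolding C'_def using id pos by (simp add: eq_divide_eq mult.commute)
  have "real ((m - Suc j) choose (r - Suc j)) * q^Suc j = (C' * q^j) * f"
    unfolding a_def[symmetric] b_def[symmetric] ab2 f_def using pos by (simp add: field_simps)
  also have "\<dots> \<le> C' * q^j"
    by (rule mult_right_le_one_le) (use q f0 f1 C'_def in auto)
  also have "C' * q^j = real ((m-j) choose (r-j)) * q^j" unfolding C'_def ab ..
  also have "\<dots> \<le> real (m choose r)" using Suc.IH Suc.prems by simp
  finally show ?case .
qed

lemma PP_bound:
  assumes r2: "2 \<le> r" and rq: "real r * (2 + sqrt 2) \<le> real m"
  shows "PP r m \<le> real r * real (m choose r) / root 4 2"
proof -
  let ?q = "2 + sqrt 2 :: real"
  have q1: "?q \<ge> 1" by simp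
  have "PP r m \<le> (\<Sum>j\<in>{2..r}. real (m choose r) / ?q)"
    unfolding PP_def
  proof (rule sum_mono)
    fix j assume j: "j \<in> {2..r}"
    have "real ((m-j) choose (r-j)) * ?q^j \<le> real (m choose r)"
      using binom_est[OF q1 rq] j by simp
    moreover have "?q^j = ?q^(j-1) * ?q" using j by (cases j) auto
    ultimately have "real ((m-j) choose (r-j)) * ?q^(j-1) * ?q \<le> real (m choose r)"
      by (simp add: mult.assoc)
    moreover have "?q > 0" by (smt (verit) real_sqrt_ge_zero)
    ultimately show "real ((m-j) choose (r-j)) * ?q^(j-1) \<le> real (m choose r) / ?q"
      by (simp add: pos_le_divide_eq)
  qed
  also have "\<dots> = real (r - 1) * real (m choose r) / ?q" using r2 by simp
  also have "\<dots> \<le> real r * real (m choose r) / root 4 2"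
  proof -
    have rt: "root 4 2 \<le> 2"
    proof -
      have "root 4 2 \<le> root 4 ((2::real)^4)" by (rule real_root_le_mono) auto
      also have "root 4 ((2::real)^4) = 2" by (rule real_root_power_cancel) auto
      finally show ?thesis .
    qed
    have rt0: "root 4 2 > 0" by simp
    have "real (r-1) \<le> real r" by simp
    then have "real (r - 1) * real (m choose r) \<le> real r * real (m choose r)"
      by (simp add: mult_right_mono)
    moreover have "root 4 2 \<le> ?q" using rt by (smt (verit) real_sqrt_ge_zero)
    ultimately show ?thesis using rt0
      by (meson frac_le of_nat_0_le_iff mult_nonneg_nonneg)
  qed
  finally show ?thesis .
qed


lemma powr_eq: "1 \<le> m \<Longrightarrow> sqrt (2^m/2) = 2 powr ((real m - 1) / 2)"
proof -
  assume m: "1 \<le> m"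
  have "(2::real)^m/2 = 2 powr (real m - 1)"
    by (simp add: powr_diff powr_realpow)
  then have "sqrt (2^m/2) = sqrt (2 powr (real m - 1))" by simp
  also have "\<dots> = (2 powr (real m - 1)) powr (1/2)" by (simp add: powr_half_sqrt)
  also have "\<dots> = 2 powr ((real m - 1) / 2)" by (simp add: powr_powr)
  finally show ?thesis .
qed

theorem lemma20:
  fixes m t r :: nat
  assumes "m \<ge> 3" and "2 \<le> r" and "real r \<le> real m / (2 + sqrt 2)"
  shows "real (R_RM t r m) \<le>
      (1 - 1 / 2^t) * 2^m
      - sqrt (2^t - 1) / 2^t * (1 + sqrt 2)^(r - 1) * 2 powr ((real m - 1) / 2)
      + sqrt (2^t - 1) / (2^t * root 4 2) * real r * real (m choose r)"
proof -
  have qpos: "(2 + sqrt 2::real) > 0" by (smt (verit) real_sqrt_ge_zero)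
  have rq: "real r * (2 + sqrt 2) \<le> real m" using assms(3) qpos by (simp add: le_divide_eq)
  have rm: "r \<le> m"
  proof -
    have "real r \<le> real r * (2 + sqrt 2)" using qpos by (simp add: mult_le_cancel_left1)
    then show ?thesis using rq by simp
  qed
  have g: "good t r m (AA t r m)" using main[of r m t] assms(2) rm by simp
  have R: "real (R_RM t r m) \<le> 2^m - AA t r m" by (rule cov_le[OF g])
  define s where "s = sqrt (2^t - 1) / (2^t::real)"
  have s0: "s \<ge> 0" unfolding s_def by simp
  have P: "PP r m \<le> real r * real (m choose r) / root 4 2" by (rule PP_bound[OF assms(2) rq])
  have X: "XX r m = (1 + sqrt 2)^(r - 1) * 2 powr ((real m - 1) / 2)"
    unfolding XX_def using powr_eq[of m] assms(1) by simp
  have A: "AA t r m = 2^m/2^t + s * XX r m - s * PP r m"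
    unfolding AA_def s_def by (simp add: right_diff_distrib)
  have o: "(1 - 1/2^t) * (2::real)^m = 2^m - 2^m/2^t" by (simp add: left_diff_distrib)
  have l: "sqrt (2^t - 1) / (2^t * root 4 2) * real r * real (m choose r) = s * (real r * real (m choose r) / root 4 2)"
    unfolding s_def by simp
  have x: "sqrt (2^t - 1) / 2^t * (1 + sqrt 2)^(r - 1) * 2 powr ((real m - 1) / 2) = s * XX r m"
    unfolding X s_def by simp
  have sp: "s * PP r m \<le> s * (real r * real (m choose r) / root 4 2)"
    by (rule mult_left_mono[OF P s0])
  have "2^m - AA t r m \<le> (1 - 1 / 2^t) * 2^m
      - sqrt (2^t - 1) / 2^t * (1 + sqrt 2)^(r - 1) * 2 powr ((real m - 1) / 2)
      + sqrt (2^t - 1) / (2^t * root 4 2) * real r * real (m choose r)"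
    unfolding A o l x using sp by linarith
  then show ?thesis using R by linarith
qed

end
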